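(* Let $G=(V,E)$ be a plane graph that is reduced with respect to Rules 1 and 2, let $D$ be a dominating set of $G$, and let $\mathcal R$ be a maximal $D$-region decomposition of $G$. If $v\in D$ and $u\in N_1(v)$, then $u\in V(\mathcal R)$.
   Context: A plane graph is a planar graph together with a fixed planar embedding. $N(v)$ is the open neighborhood, $N[v]=N(v)\cup\{v\}$, $N(v,w)=N(v)\cup N(w)$, $N[v,w]=N[v]\cup N[w]$, and $N_1(v)=\{u\in N(v):N(u)\setminus N[v]\ne\emptyset\}$. Region: for vertices $v,w$ of a plane graph $G$, a region $R(v,w)$ between $v$ and $w$ is a closed subset of the plane such that (1) its boundary is formed by two simple paths $P_1,P_2$ of $G$ from $v$ to $w$, each of length at most three (the paths may coincide, giving a degenerate region consisting of a single path), and (2) every vertex lying strictly inside $R(v,w)$ belongs to $N(v,w)$. $V(R)$ is the set of vertices lying inside or on the boundary of $R$. $D$-region decomposition: for $D\subseteq V$, a set $\mathcal R$ of regions, each between two vertices of $D$, such that (1) for each $R(v,w)\in\mathcal R$, no vertex of $D$ other than $v,w$ lies in $V(R(v,w))$, and (2) no two regions of $\mathcal R$ intersect except possibly along common boundary. $V(\mathcal R)=\bigcup_{R\in\mathcal R}V(R)$. $\mathcal R$ is maximal if there is no region $R\notin\mathcal R$ such that $\mathcal R\cup\{R\}$ is a $D$-region decomposition with $V(\mathcal R)\subsetneq V(\mathcal R\cup\{R\})$. Reduced: with $N_2(v)=\{u\in N(v)\setminus N_1(v):N(u)\cap N_1(v)\ne\emptyset\}$, $N_3(v)=N(v)\setminus(N_1(v)\cup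 N_2(v))$, and analogously $N_1(v,w),N_2(v,w),N_3(v,w)$ with $N(v,w),N[v,w]$ in place of $N(v),N[v]$: Rule 1 (when $N_3(v)\ne\emptyset$) removes $N_2(v)\cup N_3(v)$ and attaches a new pendant vertex to $v$; Rule 2 (for $v\ne w$ with $N_3(v,w)\ne\emptyset$ not dominated by a single vertex of $N_2(v,w)\cup N_3(v,w)$) in case $N_3(v,w)\subseteq N(v)\cap N(w)$ removes $N_3(v,w)$ and $N_2(v,w)\cap N(v)\cap N(w)$ and adds two new vertices each adjacent to exactly $v$ and $w$; in case $N_3(v,w)\subseteq N(v)$, $\not\subseteq N(w)$ removes $N_3(v,w)$ and $N_2(v,w)\cap N(v)$ and attaches a new pendant vertex to $v$ (symmetrically with $v,w$ exchanged); otherwise removes $N_3(v,w)\cup N_2(v,w)$ and attaches new pendant vertices to both $v$ and $w$. $G$ is reduced if no application of either rule changes $G$ up to isomorphism. *)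

theory Defs
  imports "HOL-Analysis.Analysis"
begin

definition simple_graph :: "'a set \<Rightarrow> ('a \<Rightarrow> 'a \<Rightarrow> bool) \<Rightarrow> bool" where
  "simple_graph V E \<longleftrightarrow> finite V \<and> (\<forall>u v. E u v \<longrightarrow> u \<in> V \<and> v \<in> V \<and> u \<noteq> v \<and> E v u)"

definition nb :: "'a set \<Rightarrow> ('a \<Rightarrow> 'a \<Rightarrow> bool) \<Rightarrow> 'a \<Rightarrow> 'a set" where
  "nb V E v = {u \<in> V. E v u}"

definition cnb :: "'a set \<Rightarrow> ('a \<Rightarrow> 'a \<Rightarrow> bool) \<Rightarrow> 'a \<Rightarrow> 'a set" where
  "cnb V E v = insert v (nb V E v)"

definition nb2 :: "'a set \<Rightarrow> ('a \<Rightarrow> 'a \<Rightarrow> bool) \<Rightarrow> 'a \<Rightarrow> 'a \<Rightarrow> 'a set" where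
  "nb2 V E v w = nb V E v \<union> nb V E w"

definition cnb2 :: "'a set \<Rightarrow> ('a \<Rightarrow> 'a \<Rightarrow> bool) \<Rightarrow> 'a \<Rightarrow> 'a \<Rightarrow> 'a set" where
  "cnb2 V E v w = cnb V E v \<union> cnb V E w"

definition N1 :: "'a set \<Rightarrow> ('a \<Rightarrow> 'a \<Rightarrow> bool) \<Rightarrow> 'a \<Rightarrow> 'a set" where
  "N1 V E v = {u \<in> nb V E v. nb V E u - cnb V E v \<noteq> {}}"

definition N2 :: "'a set \<Rightarrow> ('a \<Rightarrow> 'a \<Rightarrow> bool) \<Rightarrow> 'a \<Rightarrow> 'a set" where
  "N2 V E v = {u \<in> nb V E v - N1 V E v. nb V E u \<inter> N1 V E v \<noteq> {}}"

definition N3 :: "'a set \<Rightarrow> ('a \<Rightarrow> 'a \<Rightarrow> bool) \<Rightarrow> 'a \<Rightarrow> 'a set" where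
  "N3 V E v = nb V E v - (N1 V E v \<union> N2 V E v)"

definition N1p :: "'a set \<Rightarrow> ('a \<Rightarrow> 'a \<Rightarrow> bool) \<Rightarrow> 'a \<Rightarrow> 'a \<Rightarrow> 'a set" where
  "N1p V E v w = {u \<in> nb2 V E v w. nb V E u - cnb2 V E v w \<noteq> {}}"

definition N2p :: "'a set \<Rightarrow> ('a \<Rightarrow> 'a \<Rightarrow> bool) \<Rightarrow> 'a \<Rightarrow> 'a \<Rightarrow> 'a set" where
  "N2p V E v w = {u \<in> nb2 V E v w - N1p V E v w. nb V E u \<inter> N1p V E v w \<noteq> {}}"

definition N3p :: "'a set \<Rightarrow> ('a \<Rightarrow> 'a \<Rightarrow> bool) \<Rightarrow> 'a \<Rightarrow> 'a \<Rightarrow> 'a set" where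
  "N3p V E v w = nb2 V E v w - (N1p V E v w \<union> N2p V E v w)"

definition dominating_set :: "'a set \<Rightarrow> ('a \<Rightarrow> 'a \<Rightarrow> bool) \<Rightarrow> 'a set \<Rightarrow> bool" where
  "dominating_set V E D \<longleftrightarrow> D \<subseteq> V \<and> (\<forall>x \<in> V. x \<in> D \<or> (\<exists>d \<in> D. E d x))"

text \<open>Graph obtained from (V,E) by deleting the vertex set S and adding k fresh vertices
  Inr 0, ..., Inr (k-1), where fresh vertex Inr i is adjacent exactly to the (surviving)
  vertices of A i.\<close>
definition modV :: "'a set \<Rightarrow> 'a set \<Rightarrow> nat \<Rightarrow> ('a + nat) set" where
  "modV V S k = Inl ` (V - S) \<union> Inr ` {..<k}"

definition modE :: "'a set \<Rightarrow> ('a \<Rightarrow> 'a \<Rightarrow> bool) \<Rightarrow> 'a set \<Rightarrow> (nat \<Rightarrow> 'a set) \<Rightarrow> nat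
    \<Rightarrow> ('a + nat) \<Rightarrow> ('a + nat) \<Rightarrow> bool" where
  "modE V E S A k x y =
     (case (x, y) of
        (Inl a, Inl b) \<Rightarrow> E a b \<and> a \<in> V - S \<and> b \<in> V - S
      | (Inl a, Inr i) \<Rightarrow> i < k \<and> a \<in> V - S \<and> a \<in> A i
      | (Inr i, Inl a) \<Rightarrow> i < k \<and> a \<in> V - S \<and> a \<in> A i
      | (Inr i, Inr j) \<Rightarrow> False)"

definition graph_iso :: "'a set \<Rightarrow> ('a \<Rightarrow> 'a \<Rightarrow> bool) \<Rightarrow> 'b set \<Rightarrow> ('b \<Rightarrow> 'b \<Rightarrow> bool) \<Rightarrow> bool" where
  "graph_iso V E V' E' \<longleftrightarrow>
     (\<exists>f. bij_betw f V V' \<and> (\<forall>x \<in> V. \<forall>y \<in> V. E x y \<longleftrightarrow> E' (f x) (f y)))"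

text \<open>Rule 1 applicable at v and changing the graph (up to isomorphism).\<close>
definition rule1_changes :: "'a set \<Rightarrow> ('a \<Rightarrow> 'a \<Rightarrow> bool) \<Rightarrow> 'a \<Rightarrow> bool" where
  "rule1_changes V E v \<longleftrightarrow> v \<in> V \<and> N3 V E v \<noteq> {} \<and>
     (let S = N2 V E v \<union> N3 V E v; A = (\<lambda>i. {v}) in
       \<not> graph_iso V E (modV V S 1) (modE V E S A 1))"

text \<open>Result of Rule 2 at (v,w): (removed set, attachment sets of new vertices, number of new vertices).\<close>
definition rule2_data :: "'a set \<Rightarrow> ('a \<Rightarrow> 'a \<Rightarrow> bool) \<Rightarrow> 'a \<Rightarrow> 'a \<Rightarrow> 'a set \<times> (nat \<Rightarrow> 'a set) \<times> nat" where
  "rule2_data V E v w =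
     (let N3' = N3p V E v w; N2' = N2p V E v w; Nv = nb V E v; Nw = nb V E w in
      if N3' \<subseteq> Nv \<inter> Nw then (N3' \<union> (N2' \<inter> Nv \<inter> Nw), (\<lambda>i. {v, w}), 2)
      else if N3' \<subseteq> Nv then (N3' \<union> (N2' \<inter> Nv), (\<lambda>i. {v}), 1)
      else if N3' \<subseteq> Nw then (N3' \<union> (N2' \<inter> Nw), (\<lambda>i. {w}), 1)
      else (N3' \<union> N2', (\<lambda>i. if i = 0 then {v} else {w}), 2))"

definition rule2_changes :: "'a set \<Rightarrow> ('a \<Rightarrow> 'a \<Rightarrow> bool) \<Rightarrow> 'a \<Rightarrow> 'a \<Rightarrow> bool" where
  "rule2_changes V E v w \<longleftrightarrow> v \<in> V \<and> w \<in> V \<and> v \<noteq> w \<and> N3p V E v w \<noteq> {} \<and>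
     \<not> (\<exists>z \<in> N2p V E v w \<union> N3p V E v w. N3p V E v w \<subseteq> cnb V E z) \<and>
     (case rule2_data V E v w of (S, A, k) \<Rightarrow>
        \<not> graph_iso V E (modV V S k) (modE V E S A k))"

definition reduced :: "'a set \<Rightarrow> ('a \<Rightarrow> 'a \<Rightarrow> bool) \<Rightarrow> bool" where
  "reduced V E \<longleftrightarrow> (\<forall>v. \<not> rule1_changes V E v) \<and> (\<forall>v w. \<not> rule2_changes V E v w)"

definition plane_embedding :: "'a set \<Rightarrow> ('a \<Rightarrow> 'a \<Rightarrow> bool) \<Rightarrow> ('a \<Rightarrow> complex)
    \<Rightarrow> ('a \<Rightarrow> 'a \<Rightarrow> real \<Rightarrow> complex) \<Rightarrow> bool" where
  "plane_embedding V E pos crv \<longleftrightarrow>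
     inj_on pos V \<and>
     (\<forall>u v. E u v \<longrightarrow> arc (crv u v) \<and> pathstart (crv u v) = pos u \<and> pathfinish (crv u v) = pos v
        \<and> path_image (crv v u) = path_image (crv u v)) \<and>
     (\<forall>u v x. E u v \<and> x \<in> V \<and> pos x \<in> path_image (crv u v) \<longrightarrow> x = u \<or> x = v) \<and>
     (\<forall>u v u' v'. E u v \<and> E u' v' \<and> {u, v} \<noteq> {u', v'} \<longrightarrow>
        path_image (crv u v) \<inter> path_image (crv u' v') \<subseteq> pos ` ({u, v} \<inter> {u', v'}))"

definition plane_graph :: "'a set \<Rightarrow> ('a \<Rightarrow> 'a \<Rightarrow> bool) \<Rightarrow> ('a \<Rightarrow> complex)
    \<Rightarrow> ('a \<Rightarrow> 'a \<Rightarrow> real \<Rightarrow> complex) \<Rightarrow> bool" where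
  "plane_graph V E pos crv \<longleftrightarrow> simple_graph V E \<and> plane_embedding V E pos crv"

text \<open>Simple path in G from v to w (as vertex list) with at most three edges.\<close>
definition short_path :: "'a set \<Rightarrow> ('a \<Rightarrow> 'a \<Rightarrow> bool) \<Rightarrow> 'a \<Rightarrow> 'a \<Rightarrow> 'a list \<Rightarrow> bool" where
  "short_path V E v w P \<longleftrightarrow> P \<noteq> [] \<and> hd P = v \<and> last P = w \<and> distinct P \<and> set P \<subseteq> V
     \<and> length P \<le> 4 \<and> (\<forall>i. Suc i < length P \<longrightarrow> E (P ! i) (P ! Suc i))"

definition path_pts :: "('a \<Rightarrow> complex) \<Rightarrow> ('a \<Rightarrow> 'a \<Rightarrow> real \<Rightarrow> complex) \<Rightarrow> 'a list \<Rightarrow> complex set" where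
  "path_pts pos crv P = pos ` set P \<union> (\<Union>i \<in> {i. Suc i < length P}. path_image (crv (P ! i) (P ! Suc i)))"

definition is_region :: "'a set \<Rightarrow> ('a \<Rightarrow> 'a \<Rightarrow> bool) \<Rightarrow> ('a \<Rightarrow> complex)
    \<Rightarrow> ('a \<Rightarrow> 'a \<Rightarrow> real \<Rightarrow> complex) \<Rightarrow> 'a \<Rightarrow> 'a \<Rightarrow> complex set \<Rightarrow> bool" where
  "is_region V E pos crv v w R \<longleftrightarrow>
     v \<in> V \<and> w \<in> V \<and> v \<noteq> w \<and> closed R \<and>
     (\<exists>P1 P2. short_path V E v w P1 \<and> short_path V E v w P2 \<and>
        frontier R = path_pts pos crv P1 \<union> path_pts pos crv P2) \<and>
     (\<forall>x \<in> V. pos x \<in> interior R \<longrightarrow> x \<in> nb2 V E v w)"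

definition reg_verts :: "'a set \<Rightarrow> ('a \<Rightarrow> complex) \<Rightarrow> complex set \<Rightarrow> 'a set" where
  "reg_verts V pos R = {x \<in> V. pos x \<in> R}"

text \<open>A region is recorded together with its two end vertices: (v, w, R).\<close>
definition region_decomp :: "'a set \<Rightarrow> ('a \<Rightarrow> 'a \<Rightarrow> bool) \<Rightarrow> ('a \<Rightarrow> complex)
    \<Rightarrow> ('a \<Rightarrow> 'a \<Rightarrow> real \<Rightarrow> complex) \<Rightarrow> 'a set \<Rightarrow> ('a \<times> 'a \<times> complex set) set \<Rightarrow> bool" where
  "region_decomp V E pos crv D \<R> \<longleftrightarrow>
     (\<forall>(v, w, R) \<in> \<R>. v \<in> D \<and> w \<in> D \<and> is_region V E pos crv v w R \<and>
        reg_verts V pos R \<inter> D \<subseteq> {v, w}) \<and>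
     (\<forall>r1 \<in> \<R>. \<forall>r2 \<in> \<R>. r1 \<noteq> r2 \<longrightarrow>
        snd (snd r1) \<inter> snd (snd r2) \<subseteq> frontier (snd (snd r1)) \<inter> frontier (snd (snd r2)))"

definition decomp_verts :: "'a set \<Rightarrow> ('a \<Rightarrow> complex) \<Rightarrow> ('a \<times> 'a \<times> complex set) set \<Rightarrow> 'a set" where
  "decomp_verts V pos \<R> = (\<Union>(v, w, R) \<in> \<R>. reg_verts V pos R)"

definition maximal_region_decomp :: "'a set \<Rightarrow> ('a \<Rightarrow> 'a \<Rightarrow> bool) \<Rightarrow> ('a \<Rightarrow> complex)
    \<Rightarrow> ('a \<Rightarrow> 'a \<Rightarrow> real \<Rightarrow> complex) \<Rightarrow> 'a set \<Rightarrow> ('a \<times> 'a \<times> complex set) set \<Rightarrow> bool" where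
  "maximal_region_decomp V E pos crv D \<R> \<longleftrightarrow>
     region_decomp V E pos crv D \<R> \<and>
     \<not> (\<exists>r. r \<notin> \<R> \<and> region_decomp V E pos crv D (insert r \<R>) \<and>
           decomp_verts V pos \<R> \<subset> decomp_verts V pos (insert r \<R>))"

end

theory Submission
  imports Defs
begin

lemma arc_interior_empty:
  fixes g :: "real \<Rightarrow> complex"
  assumes "arc g"
  shows "interior (path_image g) = {}"
proof (rule ccontr)
  assume ne: "interior (path_image g) \<noteq> {}"
  obtain h where h: "homeomorphism {0..1} (path_image g) g h"
    using homeomorphism_arc[OF assms] by blast
  have "continuous_on (path_image g) h" using h by (simp add: homeomorphism_def)
  hence c: "continuous_on (interior (path_image g)) h"
    using continuous_on_subset interior_subset by blast
  have "inj_on h (path_image g)" using h unfolding homeomorphism_def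
    by (metis inj_on_inverseI)
  hence i: "inj_on h (interior (path_image g))" using inj_on_subset interior_subset by blast
  have "DIM(complex) \<le> DIM(real)"
    by (rule invariance_of_dimension[OF c open_interior i ne])
  thus False by simp
qed

lemma interior_Union_closed_empty:
  fixes F :: "complex set set"
  assumes "finite F" "\<And>S. S \<in> F \<Longrightarrow> closed S \<and> interior S = {}"
  shows "interior (\<Union>F) = {}"
  using assms
proof (induction F rule: finite_induct)
  case empty thus ?case by simp
next
  case (insert S F)
  have "interior (S \<union> \<Union>F) = interior S"
    by (rule interior_closed_Un_empty_interior) (use insert in auto)
  thus ?case using insert by simp
qed

lemma pg_unf:
  assumes "plane_graph V E pos crv"
  shows "inj_on pos V"
   "\<And>u v. E u v \<Longrightarrow> arc (crv u v) \<and> pathstart (crv u v) = pos u \<and> pathfinish (crv u v) = pos v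
        \<and> path_image (crv v u) = path_image (crv u v)"
   "\<And>u v x. E u v \<Longrightarrow> x \<in> V \<Longrightarrow> pos x \<in> path_image (crv u v) \<Longrightarrow> x = u \<or> x = v"
   "\<And>u v u' v'. E u v \<Longrightarrow> E u' v' \<Longrightarrow> {u, v} \<noteq> {u', v'} \<Longrightarrow>
        path_image (crv u v) \<inter> path_image (crv u' v') \<subseteq> pos ` ({u, v} \<inter> {u', v'})"
   "finite V" "\<And>u v. E u v \<Longrightarrow> u \<in> V \<and> v \<in> V \<and> u \<noteq> v \<and> E v u"
  using assms unfolding plane_graph_def plane_embedding_def simple_graph_def by simp_all

lemma pg_facts:
  assumes "plane_graph V E pos crv" "E a b"
  shows "a \<in> V" "b \<in> V" "a \<noteq> b" "E b a" "arc (crv a b)" "pathstart (crv a b) = pos a"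
    "pathfinish (crv a b) = pos b" "path_image (crv b a) = path_image (crv a b)"
  using pg_unf(2,6)[OF assms(1) assms(2)] by simp_all

lemma pg_vert:
  assumes "plane_graph V E pos crv" "E a b" "z \<in> V" "pos z \<in> path_image (crv a b)"
  shows "z = a \<or> z = b"
  using pg_unf(3)[OF assms] .

lemma pg_cross:
  assumes "plane_graph V E pos crv" "E a b" "E c e" "{a,b} \<noteq> {c,e}"
    "p \<in> path_image (crv a b)" "p \<in> path_image (crv c e)"
  shows "p \<in> pos ` ({a,b} \<inter> {c,e})"
  using pg_unf(4)[OF assms(1-4)] assms(5,6) by blast

lemma pg_inj: "plane_graph V E pos crv \<Longrightarrow> inj_on pos V"
  by (rule pg_unf(1))

lemma short_path_edge: "short_path V E v w P \<Longrightarrow> Suc i < length P \<Longrightarrow> E (P!i) (P!Suc i)"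
  unfolding short_path_def by blast

lemma short_path_set: "short_path V E v w P \<Longrightarrow> set P \<subseteq> V"
  unfolding short_path_def by blast

lemma path_pts_cases:
  assumes "short_path V E v w P" "p \<in> path_pts pos crv P"
  obtains z where "z \<in> set P" "p = pos z"
    | c e where "E c e" "p \<in> path_image (crv c e)" "path_image (crv c e) \<subseteq> path_pts pos crv P"
proof -
  consider "p \<in> pos ` set P" | i where "Suc i < length P" "p \<in> path_image (crv (P!i) (P!Suc i))"
    using assms(2) unfolding path_pts_def by blast
  then show ?thesis
  proof cases
    case 1 thus ?thesis using that(1) by blast
  next
    case (2 i)
    have "path_image (crv (P!i) (P!Suc i)) \<subseteq> path_pts pos crv P"
      unfolding path_pts_def using 2(1) by blast
    thus ?thesis using that(2) short_path_edge[OF assms(1) 2(1)] 2(2) by blast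
  qed
qed

lemma region_frontier_cases:
  assumes "is_region V E pos crv v w R" "p \<in> frontier R"
  obtains z where "z \<in> V" "p = pos z"
    | c e where "E c e" "p \<in> path_image (crv c e)" "path_image (crv c e) \<subseteq> frontier R"
proof -
  obtain P1 P2 where P: "short_path V E v w P1" "short_path V E v w P2"
    "frontier R = path_pts pos crv P1 \<union> path_pts pos crv P2"
    using assms(1) unfolding is_region_def by blast
  show ?thesis
  proof (cases "p \<in> path_pts pos crv P1")
    case True
    show ?thesis
      by (rule path_pts_cases[OF P(1) True]) (use that short_path_set[OF P(1)] P(3) in blast)+
  next
    case False
    hence F: "p \<in> path_pts pos crv P2" using assms(2) P(3) by blast
    show ?thesis
      by (rule path_pts_cases[OF P(2) F]) (use that short_path_set[OF P(2)] P(3) in blast)+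
  qed
qed

lemma core:
  assumes pg: "plane_graph V E pos crv" and reg: "is_region V E pos crv v w R"
    and ab: "E a b" and nb: "pos b \<notin> R" and p: "p \<in> path_image (crv a b)" "p \<in> frontier R"
  shows "p = pos a"
proof -
  have cl: "closed R" using reg by (simp add: is_region_def)
  have fR: "frontier R \<subseteq> R" using cl by (simp add: frontier_subset_closed)
  from region_frontier_cases[OF reg p(2)] show ?thesis
  proof cases
    case (1 z)
    have zab: "z = a \<or> z = b" using pg_vert[OF pg ab 1(1)] p 1 by simp
    then show ?thesis using 1 nb fR p by auto
  next
    case (2 c e)
    show ?thesis
    proof (cases "{a,b} = {c,e}")
      case True
      hence "(c = a \<and> e = b) \<or> (c = b \<and> e = a)" by (auto simp: doubleton_eq_iff)
      hence "path_image (crv c e) = path_image (crv a b)"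
        using pg_facts(8)[OF pg ab] by auto
      moreover have "pos b \<in> path_image (crv a b)"
        using pg_facts(7)[OF pg ab] pathfinish_in_path_image by metis
      ultimately have "pos b \<in> frontier R" using 2 by blast
      thus ?thesis using nb fR by auto
    next
      case False
      have "p \<in> pos ` ({a,b} \<inter> {c,e})" using pg_cross[OF pg ab 2(1) False p(1) 2(2)] by simp
      thus ?thesis using p(2) fR nb by auto
    qed
  qed
qed

lemma lemA:
  assumes pg: "plane_graph V E pos crv" and reg: "is_region V E pos crv v w R"
    and ab: "E a b" and nb: "pos b \<notin> R"
  shows "pos a \<notin> interior R"
proof
  assume ai: "pos a \<in> interior R"
  let ?S = "path_image (crv a b)"
  have con: "connected ?S" using pg_facts(5)[OF pg ab] by (simp add: arc_imp_path connected_path_image)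
  have "pos a \<in> ?S" using pg_facts(6)[OF pg ab] pathstart_in_path_image by metis
  hence i1: "?S \<inter> interior R \<noteq> {}" using ai by blast
  have "pos b \<in> ?S" using pg_facts(7)[OF pg ab] pathfinish_in_path_image by metis
  hence i2: "?S - interior R \<noteq> {}" using nb interior_subset by blast
  obtain p where "p \<in> ?S" "p \<in> frontier (interior R)"
    using connected_Int_frontier[OF con i1 i2] by blast
  moreover hence "p \<in> frontier R" using frontier_interior_subset by blast
  ultimately have "p = pos a" using core[OF pg reg ab nb] by blast
  moreover have "pos a \<notin> frontier (interior R)" using ai by (simp add: frontier_def)
  ultimately show False using \<open>p \<in> frontier (interior R)\<close> by simp
qed

lemma lemB:
  assumes pg: "plane_graph V E pos crv" and reg: "is_region V E pos crv v w R"
    and ab: "E a b" and nb: "pos b \<notin> R"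
  shows "path_image (crv a b) \<inter> interior R = {}"
proof (rule ccontr)
  assume "path_image (crv a b) \<inter> interior R \<noteq> {}"
  then obtain q where q: "q \<in> path_image (crv a b)" "q \<in> interior R" by blast
  let ?g = "crv a b"
  have arc: "arc ?g" using pg_facts(5)[OF pg ab] .
  have g0: "?g 0 = pos a" using pg_facts(6)[OF pg ab] by (simp add: pathstart_def)
  have g1: "?g 1 = pos b" using pg_facts(7)[OF pg ab] by (simp add: pathfinish_def)
  have inj: "inj_on ?g {0..1}" using arc by (simp add: arc_def)
  have cont: "continuous_on {0..1} ?g" using arc by (simp add: arc_def path_def)
  let ?S = "?g ` {0<..1}"
  have con: "connected ?S"
    by (rule connected_continuous_image[OF continuous_on_subset[OF cont]]) auto
  obtain t where t: "t \<in> {0..1}" "q = ?g t" using q(1) unfolding path_image_def by blast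
  have "q \<noteq> pos a" using lemA[OF pg reg ab nb] q(2) by blast
  hence "t \<noteq> 0" using t g0 by auto
  hence "q \<in> ?S" using t by auto
  hence i1: "?S \<inter> interior R \<noteq> {}" using q(2) by blast
  have "pos b \<in> ?S" unfolding g1[symmetric] by (rule imageI) simp
  hence i2: "?S - interior R \<noteq> {}" using nb interior_subset by blast
  obtain p where p: "p \<in> ?S" "p \<in> frontier (interior R)"
    using connected_Int_frontier[OF con i1 i2] by blast
  hence "p \<in> frontier R" using frontier_interior_subset by blast
  moreover have "p \<in> path_image ?g" using p(1) unfolding path_image_def by auto
  ultimately have "p = pos a" using core[OF pg reg ab nb] by blast
  moreover obtain t' where "t' \<in> {0<..1}" "p = ?g t'" using p(1) by blast
  ultimately have "?g t' = ?g 0" using g0 by simp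
  hence "t' = 0" using inj \<open>t' \<in> {0<..1}\<close> by (auto dest: inj_onD)
  thus False using \<open>t' \<in> {0<..1}\<close> by simp
qed


lemma rd_region:
  assumes "region_decomp V E pos crv D \<R>" "(a, b, R) \<in> \<R>"
  shows "a \<in> D" "b \<in> D" "is_region V E pos crv a b R" "reg_verts V pos R \<inter> D \<subseteq> {a, b}"
proof -
  have "\<forall>(v, w, R) \<in> \<R>. v \<in> D \<and> w \<in> D \<and> is_region V E pos crv v w R \<and>
        reg_verts V pos R \<inter> D \<subseteq> {v, w}" using assms(1) by (simp add: region_decomp_def)
  from bspec[OF this assms(2)] show "a \<in> D" "b \<in> D" "is_region V E pos crv a b R" "reg_verts V pos R \<inter> D \<subseteq> {a, b}"
    by simp_all
qed

lemma rd_disj: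
  assumes "region_decomp V E pos crv D \<R>" "r1 \<in> \<R>" "r2 \<in> \<R>" "r1 \<noteq> r2"
  shows "snd (snd r1) \<inter> snd (snd r2) \<subseteq> frontier (snd (snd r1)) \<inter> frontier (snd (snd r2))"
proof -
  have "\<forall>r1 \<in> \<R>. \<forall>r2 \<in> \<R>. r1 \<noteq> r2 \<longrightarrow>
        snd (snd r1) \<inter> snd (snd r2) \<subseteq> frontier (snd (snd r1)) \<inter> frontier (snd (snd r2))"
    using assms(1) by (simp add: region_decomp_def)
  thus ?thesis using assms(2-4) by blast
qed

lemma region_closed: "is_region V E pos crv a b R \<Longrightarrow> closed R"
  by (simp add: is_region_def)

lemma path_pts_sub_arcs:
  assumes sp: "short_path V E v w P" and len: "2 \<le> length P" and pg: "plane_graph V E pos crv"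
  shows "path_pts pos crv P = (\<Union>i\<in>{i. Suc i < length P}. path_image (crv (P!i) (P!Suc i)))"
proof
  show "(\<Union>i\<in>{i. Suc i < length P}. path_image (crv (P!i) (P!Suc i))) \<subseteq> path_pts pos crv P"
    unfolding path_pts_def by blast
  show "path_pts pos crv P \<subseteq> (\<Union>i\<in>{i. Suc i < length P}. path_image (crv (P!i) (P!Suc i)))"
  proof
    fix p assume "p \<in> path_pts pos crv P"
    then consider "p \<in> pos ` set P" | "p \<in> (\<Union>i\<in>{i. Suc i < length P}. path_image (crv (P!i) (P!Suc i)))"
      unfolding path_pts_def by blast
    then show "p \<in> (\<Union>i\<in>{i. Suc i < length P}. path_image (crv (P!i) (P!Suc i)))"
    proof cases
      case 1
      then obtain k where k: "k < length P" "p = pos (P!k)" by (auto simp: in_set_conv_nth)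
      show ?thesis
      proof (cases "Suc k < length P")
        case True
        have "pathstart (crv (P!k) (P!Suc k)) = pos (P!k)"
          using pg_facts(6)[OF pg short_path_edge[OF sp True]] .
        hence "p \<in> path_image (crv (P!k) (P!Suc k))" using k pathstart_in_path_image by metis
        thus ?thesis by (rule UN_I[rotated]) (use True in simp)
      next
        case False
        obtain j where j: "k = Suc j" using len k(1) False by (cases k) auto
        have jl: "Suc j < length P" using j k by simp
        have "pathfinish (crv (P!j) (P!Suc j)) = pos (P!Suc j)"
          using pg_facts(7)[OF pg short_path_edge[OF sp jl]] .
        hence "p \<in> path_image (crv (P!j) (P!Suc j))" using k j pathfinish_in_path_image by metis
        thus ?thesis by (rule UN_I[rotated]) (use jl in simp)
      qed
    qed auto
  qed
qed

lemma new_region: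
  assumes pg: "plane_graph V E pos crv"
    and rd: "region_decomp V E pos crv D \<R>"
    and sp: "short_path V E v d P" and len: "2 \<le> length P"
    and vD: "v \<in> D" and dD: "d \<in> D" and vd: "v \<noteq> d"
    and PD: "set P \<inter> D \<subseteq> {v, d}"
    and uP: "u \<in> set P" and uV: "u \<notin> decomp_verts V pos \<R>"
    and good: "\<And>i a b R. Suc i < length P \<Longrightarrow> (a, b, R) \<in> \<R> \<Longrightarrow>
        path_image (crv (P!i) (P!Suc i)) \<inter> interior R = {}"
  shows "\<not> maximal_region_decomp V E pos crv D \<R>"
proof -
  define Rn where "Rn = path_pts pos crv P"
  have Rn_eq: "Rn = (\<Union>i\<in>{i. Suc i < length P}. path_image (crv (P!i) (P!Suc i)))"
    using path_pts_sub_arcs[OF sp len pg] Rn_def by simp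
  have fin: "finite {i. Suc i < length P}" by (rule finite_subset[of _ "{..<length P}"]) auto
  have arcs: "\<And>i. Suc i < length P \<Longrightarrow> arc (crv (P!i) (P!Suc i))"
    using short_path_edge[OF sp] pg_facts(5)[OF pg] by blast
  have clRn: "closed Rn" unfolding Rn_eq
    using fin arcs by (auto intro!: closed_UN closed_path_image arc_imp_path)
  have intRn: "interior Rn = {}" unfolding Rn_eq
  proof (rule interior_Union_closed_empty)
    show "finite ((\<lambda>i. path_image (crv (P!i) (P!Suc i))) ` {i. Suc i < length P})" using fin by simp
    fix S assume "S \<in> (\<lambda>i. path_image (crv (P!i) (P!Suc i))) ` {i. Suc i < length P}"
    then obtain i where "Suc i < length P" "S = path_image (crv (P!i) (P!Suc i))" by blast
    thus "closed S \<and> interior S = {}" using arcs[of i]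
      by (simp add: closed_path_image arc_imp_path arc_interior_empty)
  qed
  have frRn: "frontier Rn = Rn" using clRn intRn by (simp add: frontier_def)
  have Rn_int: "Rn \<inter> interior R = {}" if "(a,b,R) \<in> \<R>" for a b R
    unfolding Rn_eq using good that by blast
  have PV: "set P \<subseteq> V" using short_path_set[OF sp] .
  have hl: "P \<noteq> []" "hd P = v" "last P = d" using sp by (simp_all add: short_path_def)
  have vV: "v \<in> V" "d \<in> V" using hl PV hd_in_set[OF hl(1)] last_in_set[OF hl(1)] by auto
  have "\<exists>P1 P2. short_path V E v d P1 \<and> short_path V E v d P2 \<and>
        frontier Rn = path_pts pos crv P1 \<union> path_pts pos crv P2"
    by (rule exI[of _ P], rule exI[of _ P]) (use sp frRn Rn_def in simp)
  hence regn: "is_region V E pos crv v d Rn"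
    unfolding is_region_def using vV vd clRn intRn by simp
  have rv: "reg_verts V pos Rn \<subseteq> set P"
  proof
    fix z assume "z \<in> reg_verts V pos Rn"
    hence z: "z \<in> V" "pos z \<in> Rn" by (auto simp: reg_verts_def)
    then obtain i where i: "Suc i < length P" "pos z \<in> path_image (crv (P!i) (P!Suc i))"
      unfolding Rn_eq by blast
    have "z = P!i \<or> z = P!Suc i" using pg_vert[OF pg short_path_edge[OF sp i(1)] z(1) i(2)] .
    thus "z \<in> set P" using i(1) by auto
  qed
  have uRn: "u \<in> reg_verts V pos Rn"
    using uP PV unfolding reg_verts_def Rn_def path_pts_def by auto
  let ?r = "(v, d, Rn)"
  have rnot: "?r \<notin> \<R>" using uRn uV unfolding decomp_verts_def by blast
  have key: "Rn \<inter> R \<subseteq> frontier Rn \<inter> frontier R" if "(a,b,R) \<in> \<R>" for a b R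
  proof -
    have "closed R" using region_closed[OF rd_region(3)[OF rd that]] .
    hence "R - interior R = frontier R" by (simp add: frontier_def closure_closed)
    thus ?thesis using Rn_int[OF that] frRn by blast
  qed
  have rd2: "region_decomp V E pos crv D (insert ?r \<R>)"
    unfolding region_decomp_def
  proof (intro conjI)
    show "\<forall>(a, b, R)\<in>insert ?r \<R>. a \<in> D \<and> b \<in> D \<and> is_region V E pos crv a b R \<and>
        reg_verts V pos R \<inter> D \<subseteq> {a, b}"
    proof -
      have P1: "v \<in> D \<and> d \<in> D \<and> is_region V E pos crv v d Rn \<and> reg_verts V pos Rn \<inter> D \<subseteq> {v, d}"
        using regn rv PD vD dD by blast
      have P2: "\<forall>(a, b, R)\<in>\<R>. a \<in> D \<and> b \<in> D \<and> is_region V E pos crv a b R \<and>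
        reg_verts V pos R \<inter> D \<subseteq> {a, b}" using rd by (simp add: region_decomp_def)
      show ?thesis using P1 P2 by simp
    qed
    show "\<forall>r1\<in>insert ?r \<R>. \<forall>r2\<in>insert ?r \<R>. r1 \<noteq> r2 \<longrightarrow>
        snd (snd r1) \<inter> snd (snd r2) \<subseteq> frontier (snd (snd r1)) \<inter> frontier (snd (snd r2))"
    proof (intro ballI impI)
      fix r1 r2 assume r1: "r1 \<in> insert ?r \<R>" and r2: "r2 \<in> insert ?r \<R>" and ne: "r1 \<noteq> r2"
      consider "r1 \<in> \<R>" "r2 \<in> \<R>" | "r1 = ?r" "r2 \<in> \<R>" | "r2 = ?r" "r1 \<in> \<R>"
        using r1 r2 ne by blast
      then show "snd (snd r1) \<inter> snd (snd r2) \<subseteq> frontier (snd (snd r1)) \<inter> frontier (snd (snd r2))"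
      proof cases
        case 1 thus ?thesis using rd_disj[OF rd _ _ ne] by blast
      next
        case 2
        obtain a b R where "r2 = (a,b,R)" by (cases r2) auto
        thus ?thesis using key[of a b R] 2 by auto
      next
        case 3
        obtain a b R where "r1 = (a,b,R)" by (cases r1) auto
        thus ?thesis using key[of a b R] 3 by auto
      qed
    qed
  qed
  have "decomp_verts V pos \<R> \<subset> decomp_verts V pos (insert ?r \<R>)"
    using uRn uV unfolding decomp_verts_def by auto
  thus ?thesis using rnot rd2 unfolding maximal_region_decomp_def by blast
qed


lemma sp2: "E a b \<Longrightarrow> a \<noteq> b \<Longrightarrow> a \<in> V \<Longrightarrow> b \<in> V \<Longrightarrow> short_path V E a b [a,b]"
  unfolding short_path_def by (auto simp: less_Suc_eq)

lemma sp3: "E a b \<Longrightarrow> E b c \<Longrightarrow> distinct [a,b,c] \<Longrightarrow> set [a,b,c] \<subseteq> V \<Longrightarrow> short_path V E a c [a,b,c]"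
  unfolding short_path_def
proof (intro conjI allI impI)
  fix i assume "E a b" "E b c" "Suc i < length [a,b,c]"
  moreover hence "i = 0 \<or> i = 1" by auto
  ultimately show "E ([a,b,c] ! i) ([a,b,c] ! Suc i)" by auto
qed auto

lemma sp4: "E a b \<Longrightarrow> E b c \<Longrightarrow> E c d \<Longrightarrow> distinct [a,b,c,d] \<Longrightarrow> set [a,b,c,d] \<subseteq> V \<Longrightarrow>
    short_path V E a d [a,b,c,d]"
  unfolding short_path_def
proof (intro conjI allI impI)
  fix i assume "E a b" "E b c" "E c d" "Suc i < length [a,b,c,d]"
  moreover hence "i = 0 \<or> i = 1 \<or> i = 2" by auto
  ultimately show "E ([a,b,c,d] ! i) ([a,b,c,d] ! Suc i)" by auto
qed auto

lemma boundary_nb: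
  assumes pg: "plane_graph V E pos crv" and sp: "short_path V E v0 w0 P1" and xV: "x \<in> V"
    and px: "pos x \<in> path_pts pos crv P1" and xv: "x \<noteq> v0" and xw: "x \<noteq> w0"
  shows "\<exists>d'. (d' = v0 \<or> d' = w0) \<and> E x d' \<and> path_image (crv x d') \<subseteq> path_pts pos crv P1"
proof -
  have PV: "set P1 \<subseteq> V" using short_path_set[OF sp] .
  have xP: "x \<in> set P1"
  proof -
    consider "pos x \<in> pos ` set P1" | i where "Suc i < length P1" "pos x \<in> path_image (crv (P1!i) (P1!Suc i))"
      using px unfolding path_pts_def by blast
    then show ?thesis
    proof cases
      case 1
      then obtain z where "z \<in> set P1" "pos x = pos z" by blast
      moreover hence "x = z" using pg_inj[OF pg] xV PV by (meson inj_onD subsetD)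
      ultimately show ?thesis by simp
    next
      case (2 i)
      have "x = P1!i \<or> x = P1!Suc i" using pg_vert[OF pg short_path_edge[OF sp 2(1)] xV 2(2)] .
      thus ?thesis using 2(1) by auto
    qed
  qed
  then obtain j where j: "j < length P1" "P1!j = x" by (auto simp: in_set_conv_nth)
  have ne: "P1 \<noteq> []" and hd: "hd P1 = v0" and lst: "last P1 = w0" and l4: "length P1 \<le> 4"
    using sp unfolding short_path_def by auto
  have "j \<noteq> 0"
  proof
    assume "j = 0"
    hence "x = hd P1" using j(2) ne by (simp add: hd_conv_nth)
    thus False using hd xv by simp
  qed
  moreover have "j \<noteq> length P1 - 1"
  proof
    assume "j = length P1 - 1"
    hence "x = last P1" using j(2) ne by (simp add: last_conv_nth)
    thus False using lst xw by simp
  qed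
  ultimately have cases: "j = 1 \<or> (j = 2 \<and> length P1 = 4)" using j(1) l4 by auto
  show ?thesis
  proof (cases "j = 1")
    case True
    have e: "E (P1!0) (P1!Suc 0)" using short_path_edge[OF sp, of 0] True j by simp
    have "P1!0 = v0" using hd ne by (simp add: hd_conv_nth)
    moreover have "E x (P1!0)" using pg_facts(4)[OF pg e] True j by simp
    moreover have "path_image (crv x (P1!0)) \<subseteq> path_pts pos crv P1"
    proof -
      have "path_image (crv x (P1!0)) = path_image (crv (P1!0) (P1!Suc 0))"
        using pg_facts(8)[OF pg e] True j by simp
      moreover have "path_image (crv (P1!0) (P1!Suc 0)) \<subseteq> path_pts pos crv P1"
        unfolding path_pts_def using True j by auto
      ultimately show ?thesis by simp
    qed
    ultimately show ?thesis by blast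
  next
    case False
    hence j2: "j = 2" "length P1 = 4" using cases by auto
    have e: "E (P1!2) (P1!Suc 2)" using short_path_edge[OF sp, of 2] j2 by simp
    have w: "P1!Suc 2 = w0" using lst ne j2 by (simp add: last_conv_nth)
    have i2: "Suc 2 < length P1" using j2 by simp
    have sub: "path_image (crv (P1!2) (P1!Suc 2)) \<subseteq> path_pts pos crv P1"
      unfolding path_pts_def using i2 by blast
    have xx: "x = P1!2" using j j2 by simp
    show ?thesis using w e sub unfolding xx by blast
  qed
qed

theorem lemma6:
  fixes V :: "'a set" and E :: "'a \<Rightarrow> 'a \<Rightarrow> bool"
    and pos :: "'a \<Rightarrow> complex" and crv :: "'a \<Rightarrow> 'a \<Rightarrow> real \<Rightarrow> complex"
    and D :: "'a set" and \<R> :: "('a \<times> 'a \<times> complex set) set"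
  assumes "plane_graph V E pos crv"
    and "reduced V E"
    and "dominating_set V E D"
    and "maximal_region_decomp V E pos crv D \<R>"
    and "v \<in> D"
    and "u \<in> N1 V E v"
  shows "u \<in> decomp_verts V pos \<R>"
proof (rule ccontr)
  assume uV: "u \<notin> decomp_verts V pos \<R>"
  note pg = assms(1)
  have rd: "region_decomp V E pos crv D \<R>" using assms(4) by (simp add: maximal_region_decomp_def)
  have regs: "\<And>a b R. (a,b,R) \<in> \<R> \<Longrightarrow> is_region V E pos crv a b R" using rd_region(3)[OF rd] .
  from assms(6) obtain x where vu: "E v u" and ux: "E u x" and xV: "x \<in> V" and xv: "x \<noteq> v"
    and nvx: "\<not> E v x" and uVV: "u \<in> V"
    unfolding N1_def nb_def cnb_def by auto
  have uR: "\<And>a b R. (a,b,R) \<in> \<R> \<Longrightarrow> pos u \<notin> R"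
    using uV uVV unfolding decomp_verts_def reg_verts_def by blast
  have vV: "v \<in> V" using pg_facts(1)[OF pg vu] .
  have uv: "u \<noteq> v" "u \<noteq> x" using pg_facts(3)[OF pg vu] pg_facts(3)[OF pg ux] by auto
  have Dom: "D \<subseteq> V" "\<And>y. y \<in> V \<Longrightarrow> y \<notin> D \<Longrightarrow> \<exists>d\<in>D. E d y"
    using assms(3) unfolding dominating_set_def by auto
  have g_vu: "path_image (crv v u) \<inter> interior R = {}" if "(a,b,R)\<in>\<R>" for a b R
    using lemB[OF pg regs[OF that] vu uR[OF that]] .
  have g_ux: "path_image (crv u x) \<inter> interior R = {}" if "(a,b,R)\<in>\<R>" for a b R
    using lemB[OF pg regs[OF that] pg_facts(4)[OF pg ux] uR[OF that]] pg_facts(8)[OF pg ux] by simp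
  have nm: "\<not> maximal_region_decomp V E pos crv D \<R>"
  proof (cases "u \<in> D")
    case True
    show ?thesis
      by (rule new_region[OF pg rd sp2[where E=E and a=v and b=u and V=V, OF vu uv(1)[symmetric] vV uVV], of u])
         (use assms(5) True uv uV g_vu in \<open>auto simp: less_Suc_eq\<close>)
  next
    case uD: False
    show ?thesis
    proof (cases "x \<in> D")
      case True
      have sp: "short_path V E v x [v,u,x]" by (rule sp3) (use vu ux uv xv vV uVV xV in auto)
      show ?thesis
      proof (rule new_region[OF pg rd sp _ assms(5) True xv[symmetric], of u])
        fix i a b R assume "Suc i < length [v,u,x]" and r: "(a,b,R) \<in> \<R>"
        hence "i = 0 \<or> i = 1" by auto
        thus "path_image (crv ([v,u,x]!i) ([v,u,x]!Suc i)) \<inter> interior R = {}"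
          using g_vu[OF r] g_ux[OF r] by auto
      qed (use uD uV in auto)
    next
      case xD: False
      show ?thesis
      proof (cases "x \<in> decomp_verts V pos \<R>")
        case True
        then obtain v0 w0 R0 where r0: "(v0,w0,R0) \<in> \<R>" "pos x \<in> R0"
          unfolding decomp_verts_def reg_verts_def by auto
        have reg0: "is_region V E pos crv v0 w0 R0" using regs[OF r0(1)] .
        have v0D: "v0 \<in> D" "w0 \<in> D" using rd_region(1,2)[OF rd r0(1)] by auto
        have "pos x \<notin> interior R0" using lemA[OF pg reg0 pg_facts(4)[OF pg ux] uR[OF r0(1)]] .
        moreover have "closed R0" using region_closed[OF reg0] .
        ultimately have fx: "pos x \<in> frontier R0" using r0(2) by (simp add: frontier_def closure_closed)
        obtain P1 P2 where P: "short_path V E v0 w0 P1" "short_path V E v0 w0 P2"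
          "frontier R0 = path_pts pos crv P1 \<union> path_pts pos crv P2"
          using reg0 unfolding is_region_def by blast
        have xne: "x \<noteq> v0" "x \<noteq> w0" using xD v0D by auto
        obtain d' where d': "d' = v0 \<or> d' = w0" "E x d'" "path_image (crv x d') \<subseteq> frontier R0"
        proof (cases "pos x \<in> path_pts pos crv P1")
          case True
          thus ?thesis using boundary_nb[OF pg P(1) xV True xne] that P(3) by blast
        next
          case False
          hence "pos x \<in> path_pts pos crv P2" using fx P(3) by blast
          thus ?thesis using boundary_nb[OF pg P(2) xV _ xne] that P(3) by blast
        qed
        have d'D: "d' \<in> D" using d'(1) v0D by auto
        have g_xd: "path_image (crv x d') \<inter> interior R = {}" if "(a,b,R)\<in>\<R>" for a b R
        proof (cases "(a,b,R) = (v0,w0,R0)")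
          case True
          thus ?thesis using d'(3) by (auto simp: frontier_def)
        next
          case False
          have "R0 \<inter> R \<subseteq> frontier R0 \<inter> frontier R" using rd_disj[OF rd r0(1) that False[symmetric]] by simp
          moreover have "frontier R0 \<subseteq> R0" using \<open>closed R0\<close> by (simp add: frontier_subset_closed)
          ultimately have "path_image (crv x d') \<inter> R \<subseteq> frontier R" using d'(3) by blast
          thus ?thesis using interior_subset by (auto simp: frontier_def)
        qed
        have dv: "d' \<noteq> v" using d'(2) nvx pg_facts(4)[OF pg d'(2)] by auto
        have du: "d' \<noteq> u" using d'D uD by auto
        have dx: "d' \<noteq> x" using pg_facts(3)[OF pg d'(2)] by auto
        have d'V: "d' \<in> V" using pg_facts(2)[OF pg d'(2)] .
        have sp: "short_path V E v d' [v,u,x,d']"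
          by (rule sp4) (use vu ux d'(2) uv xv dv du dx vV uVV xV d'V in auto)
        show ?thesis
        proof (rule new_region[OF pg rd sp _ assms(5) d'D dv[symmetric], of u])
          fix i a b R assume "Suc i < length [v,u,x,d']" and r: "(a,b,R) \<in> \<R>"
          hence "i = 0 \<or> i = 1 \<or> i = 2" by auto
          thus "path_image (crv ([v,u,x,d']!i) ([v,u,x,d']!Suc i)) \<inter> interior R = {}"
            using g_vu[OF r] g_ux[OF r] g_xd[OF r] by auto
        qed (use uD xD uV in auto)
      next
        case False
        have xR: "pos x \<notin> R" if "(a,b,R) \<in> \<R>" for a b R
          using False xV that unfolding decomp_verts_def reg_verts_def by blast
        obtain d where dD: "d \<in> D" and dx: "E d x" using Dom(2)[OF xV xD] by blast
        have g_xd: "path_image (crv x d) \<inter> interior R = {}" if "(a,b,R)\<in>\<R>" for a b R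
          using lemB[OF pg regs[OF that] dx xR[OF that]] pg_facts(8)[OF pg dx] by simp
        have dv: "d \<noteq> v" using dx nvx by auto
        have du: "d \<noteq> u" using dD uD by auto
        have dx': "d \<noteq> x" using pg_facts(3)[OF pg dx] by auto
        have dV: "d \<in> V" using pg_facts(1)[OF pg dx] .
        have sp: "short_path V E v d [v,u,x,d]"
          by (rule sp4) (use vu ux pg_facts(4)[OF pg dx] uv xv dv du dx' vV uVV xV dV in auto)
        show ?thesis
        proof (rule new_region[OF pg rd sp _ assms(5) dD dv[symmetric], of u])
          fix i a b R assume "Suc i < length [v,u,x,d]" and r: "(a,b,R) \<in> \<R>"
          hence "i = 0 \<or> i = 1 \<or> i = 2" by auto
          thus "path_image (crv ([v,u,x,d]!i) ([v,u,x,d]!Suc i)) \<inter> interior R = {}"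
            using g_vu[OF r] g_ux[OF r] g_xd[OF r] by auto
        qed (use uD xD uV in auto)
      qed
    qed
  qed
  thus False using assms(4) by simp
qed

end
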